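(* Let $f:X\to X$ be a continuous map on a metric space $(X,d)$. The following are equivalent: (i) $\operatorname{Per}(\overline f)$ is dense in $(\mathcal{K}(X),d_H)$; (ii) $\operatorname{Per}(\hat f)$ is dense in $\mathcal{F}_\infty(X)$; (iii) $\operatorname{Per}(\hat f)$ is dense in $\mathcal{F}_0(X)$; (iv) $\operatorname{Per}(\hat f)$ is dense in $\mathcal{F}_S(X)$; (v) $\operatorname{Per}(\hat f)$ is dense in $\mathcal{F}_E(X)$.
   Context: For a map $g:Y\to Y$, $\operatorname{Per}(g)=\{y\in Y:g^p(y)=y$ for some $p\in\mathbb{N}\}$ is the set of periodic points. $\mathbb{I}=[0,1]$. Fuzzy setting: for $u:X\to\mathbb{I}$, $u_\alpha=\{x:u(x)\ge\alpha\}$ ($\alpha\in]0,1]$), $u_0=\overline{\{x:u(x)>0\}}$. $\mathcal{F}(X)$: upper-semicontinuous $u:X\to\mathbb{I}$ with $u_0$ compact and $u_1\ne\varnothing$. $\mathcal{K}(X)$: non-empty compact subsets with Hausdorff metric $d_H(A,B)=\max\{\sup_{a\in A}d(a,B),\sup_{b\in B}d(b,A)\}$; $\overline f(K)=f(K)$. Zadeh extension: $\hat f(u)(x)=\sup\{u(y):f(y)=x\}$ (and $0$ if $f^{-1}(\{x\})=\varnothing$). Metrics on $\mathcal{F}(X)$: $d_\infty(u,v)=\sup_{\alpha\in\mathbb{I}}d_H(u_\alpha,v_\alpha)$; $d_0(u,v)=\inf\{\varepsilon>0:\exists\xi\in\mathcal{T},\ \sup_\alpha|\xi(\alpha)-\alpha|\le\varepsilon,\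 d_\infty(u,\xi\circ v)\le\varepsilon\}$ with $\mathcal{T}$ the strictly increasing homeomorphisms of $\mathbb{I}$; with $\overline d((x,\alpha),(y,\beta))=\max\{d(x,y),|\alpha-\beta|\}$, $\operatorname{end}(u)=\{(x,\alpha):u(x)\ge\alpha\}$, $\operatorname{send}(u)=\operatorname{end}(u)\cap(u_0\times\mathbb{I})$, $d_E$ and $d_S$ are the $\overline d$-Hausdorff distances of endographs and sendographs respectively. $\mathcal{F}_\rho(X)$ denotes $(\mathcal{F}(X),\rho)$. *)

theory Defs
  imports "HOL-Analysis.Analysis"
begin

definition Per :: "('b \<Rightarrow> 'b) \<Rightarrow> 'b set \<Rightarrow> 'b set" where
  "Per g S = {y \<in> S. \<exists>p::nat. p > 0 \<and> (g ^^ p) y = y}"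

definition dense_wrt :: "('b \<Rightarrow> 'b \<Rightarrow> real) \<Rightarrow> 'b set \<Rightarrow> 'b set \<Rightarrow> bool" where
  "dense_wrt rho S A \<longleftrightarrow> A \<subseteq> S \<and> (\<forall>u\<in>S. \<forall>e>0. \<exists>v\<in>A. rho u v < e)"

definition hdist :: "('b \<Rightarrow> 'b \<Rightarrow> real) \<Rightarrow> 'b set \<Rightarrow> 'b set \<Rightarrow> real" where
  "hdist D A B = max (SUP a\<in>A. INF b\<in>B. D a b) (SUP b\<in>B. INF a\<in>A. D a b)"

definition dH :: "'a::metric_space set \<Rightarrow> 'a set \<Rightarrow> real" where
  "dH = hdist dist"

definition KX :: "'a::metric_space set set" where
  "KX = {K. K \<noteq> {} \<and> compact K}"

definition fbar :: "('a \<Rightarrow> 'a) \<Rightarrow> 'a set \<Rightarrow> 'a set" where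
  "fbar f K = f ` K"

definition cut :: "('a::metric_space \<Rightarrow> real) \<Rightarrow> real \<Rightarrow> 'a set" where
  "cut u \<alpha> = (if \<alpha> = 0 then closure {x. u x > 0} else {x. u x \<ge> \<alpha>})"

definition upper_semicont :: "('a::metric_space \<Rightarrow> real) \<Rightarrow> bool" where
  "upper_semicont u \<longleftrightarrow> (\<forall>a. open {x. u x < a})"

definition FX :: "('a::metric_space \<Rightarrow> real) set" where
  "FX = {u. (\<forall>x. 0 \<le> u x \<and> u x \<le> 1) \<and> upper_semicont u \<and> compact (cut u 0) \<and> cut u 1 \<noteq> {}}"

definition zadeh :: "('a \<Rightarrow> 'a) \<Rightarrow> ('a \<Rightarrow> real) \<Rightarrow> ('a \<Rightarrow> real)" where
  "zadeh f u x = (if f -` {x} = {} then 0 else (SUP y\<in>f -` {x}. u y))"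

definition d_inf :: "('a::metric_space \<Rightarrow> real) \<Rightarrow> ('a \<Rightarrow> real) \<Rightarrow> real" where
  "d_inf u v = (SUP \<alpha>\<in>{0..1}. dH (cut u \<alpha>) (cut v \<alpha>))"

definition Tset :: "(real \<Rightarrow> real) set" where
  "Tset = {\<xi>. strict_mono_on {0..1} \<xi> \<and> continuous_on {0..1} \<xi> \<and> \<xi> ` {0..1} = {0..1}}"

definition d_0 :: "('a::metric_space \<Rightarrow> real) \<Rightarrow> ('a \<Rightarrow> real) \<Rightarrow> real" where
  "d_0 u v = Inf {\<epsilon>. \<epsilon> > 0 \<and> (\<exists>\<xi>\<in>Tset. (SUP \<alpha>\<in>{0..1}. \<bar>\<xi> \<alpha> - \<alpha>\<bar>) \<le> \<epsilon> \<and> d_inf u (\<xi> \<circ> v) \<le> \<epsilon>)}"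

definition dbar :: "('a::metric_space \<times> real) \<Rightarrow> ('a \<times> real) \<Rightarrow> real" where
  "dbar p q = max (dist (fst p) (fst q)) \<bar>snd p - snd q\<bar>"

definition endo :: "('a::metric_space \<Rightarrow> real) \<Rightarrow> ('a \<times> real) set" where
  "endo u = {(x, \<alpha>). \<alpha> \<in> {0..1} \<and> u x \<ge> \<alpha>}"

definition sendo :: "('a::metric_space \<Rightarrow> real) \<Rightarrow> ('a \<times> real) set" where
  "sendo u = endo u \<inter> (cut u 0 \<times> {0..1})"

definition d_E :: "('a::metric_space \<Rightarrow> real) \<Rightarrow> ('a \<Rightarrow> real) \<Rightarrow> real" where
  "d_E u v = hdist dbar (endo u) (endo v)"

definition d_S :: "('a::metric_space \<Rightarrow> real) \<Rightarrow> ('a \<Rightarrow> real) \<Rightarrow> real" where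
  "d_S u v = hdist dbar (sendo u) (sendo v)"

end

theory Submission
  imports Defs
begin

lemma usc_max:
  fixes u :: "'a::metric_space \<Rightarrow> real"
  assumes "upper_semicont u" "compact C" "C \<noteq> {}"
  shows "\<exists>x0\<in>C. \<forall>x\<in>C. u x \<le> u x0"
proof (rule ccontr)
  assume H: "\<not> ?thesis"
  have cov: "C \<subseteq> (\<Union>c\<in>C. {x. u x < u c})"
    using H by (auto simp: not_le)
  obtain D where D: "D \<subseteq> C" "finite D" "C \<subseteq> (\<Union>c\<in>D. {x. u x < u c})"
    using compactE_image[OF assms(2) _ cov] assms(1) unfolding upper_semicont_def by metis
  have "D \<noteq> {}" using D assms(3) by auto
  then have "Max (u ` D) \<in> u ` D" using D(2) by simp
  then obtain x1 where x1: "x1 \<in> D" "u x1 = Max (u ` D)" by auto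
  then obtain c where "c \<in> D" "u x1 < u c" using D by blast
  moreover have "u c \<le> Max (u ` D)" using \<open>c \<in> D\<close> D(2) by simp
  ultimately show False using x1 by simp
qed

lemma hdist_le:
  assumes "A \<noteq> {}" "B \<noteq> {}" "\<And>a b. D a b \<ge> 0"
    "\<forall>a\<in>A. \<exists>b\<in>B. D a b \<le> c" "\<forall>b\<in>B. \<exists>a\<in>A. D a b \<le> c"
  shows "hdist D A B \<le> c"
  unfolding hdist_def
proof (rule max.boundedI)
  show "(SUP a\<in>A. INF b\<in>B. D a b) \<le> c"
  proof (rule cSUP_least[OF assms(1)])
    fix a assume "a \<in> A"
    then obtain b where "b \<in> B" "D a b \<le> c" using assms(4) by blast
    moreover have "bdd_below ((D a) ` B)" using assms(3) by (intro bdd_belowI[where m=0]) auto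
    ultimately show "(INF b\<in>B. D a b) \<le> c" by (meson cINF_lower2)
  qed
  show "(SUP b\<in>B. INF a\<in>A. D a b) \<le> c"
  proof (rule cSUP_least[OF assms(2)])
    fix b assume "b \<in> B"
    then obtain a where "a \<in> A" "D a b \<le> c" using assms(5) by blast
    moreover have "bdd_below ((\<lambda>a. D a b) ` A)" using assms(3) by (intro bdd_belowI[where m=0]) auto
    ultimately show "(INF a\<in>A. D a b) \<le> c" by (meson cINF_lower2)
  qed
qed

lemma hdist_lt:
  assumes "A \<noteq> {}" "B \<noteq> {}" "\<And>a b. D a b \<ge> 0"
    "bdd_above ((\<lambda>a. INF b\<in>B. D a b) ` A)" "bdd_above ((\<lambda>b. INF a\<in>A. D a b) ` B)"
    "hdist D A B < c"
  shows "(\<forall>a\<in>A. \<exists>b\<in>B. D a b < c) \<and> (\<forall>b\<in>B. \<exists>a\<in>A. D a b < c)"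
proof safe
  fix a assume "a \<in> A"
  have "(INF b\<in>B. D a b) \<le> (SUP a\<in>A. INF b\<in>B. D a b)" by (rule cSUP_upper[OF \<open>a\<in>A\<close> assms(4)])
  also have "\<dots> \<le> hdist D A B" unfolding hdist_def by simp
  finally have "(INF b\<in>B. D a b) < c" using assms(6) by simp
  moreover have "bdd_below ((D a) ` B)" using assms(3) by (intro bdd_belowI[where m=0]) auto
  ultimately show "\<exists>b\<in>B. D a b < c" using cINF_less_iff[OF assms(2)] by blast
next
  fix b assume "b \<in> B"
  have "(INF a\<in>A. D a b) \<le> (SUP b\<in>B. INF a\<in>A. D a b)" by (rule cSUP_upper[OF \<open>b\<in>B\<close> assms(5)])
  also have "\<dots> \<le> hdist D A B" unfolding hdist_def by simp
  finally have "(INF a\<in>A. D a b) < c" using assms(6) by simp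
  moreover have "bdd_below ((\<lambda>a. D a b) ` A)" using assms(3) by (intro bdd_belowI[where m=0]) auto
  ultimately show "\<exists>a\<in>A. D a b < c" using cINF_less_iff[OF assms(1)] by blast
qed

lemma FX_cut_sub: "0 \<le> a \<Longrightarrow> cut u a \<subseteq> cut u 0"
proof
  fix x assume a: "0 \<le> a" and x: "x \<in> cut u a"
  show "x \<in> cut u 0"
  proof (cases "a = 0")
    case True then show ?thesis using x by simp
  next
    case False
    then have "u x > 0" using x a by (simp add: cut_def)
    then show ?thesis unfolding cut_def using closure_subset[of "{x. u x > 0}"] by auto
  qed
qed

lemma FX_cut1_sub: "a \<le> 1 \<Longrightarrow> cut u 1 \<subseteq> cut u a"
proof
  fix x assume a: "a \<le> 1" and x: "x \<in> cut u 1"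
  then have u1: "u x \<ge> 1" by (simp add: cut_def)
  show "x \<in> cut u a"
  proof (cases "a = 0")
    case True
    have "u x > 0" using u1 by simp
    then show ?thesis unfolding cut_def True using closure_subset[of "{x. u x > 0}"] by auto
  next
    case False
    then show ?thesis using u1 a by (simp add: cut_def)
  qed
qed

lemma FX_cut_ne: "u \<in> FX \<Longrightarrow> a \<le> 1 \<Longrightarrow> cut u a \<noteq> {}"
  using FX_cut1_sub[of a u] unfolding FX_def by auto

lemma FX_cut_compact: "u \<in> FX \<Longrightarrow> 0 \<le> a \<Longrightarrow> compact (cut u a)"
proof (cases "a = 0")
  case True assume "u \<in> FX" then show ?thesis using True by (simp add: FX_def)
next
  case False assume u: "u \<in> FX" and a0: "0 \<le> a"
  have "- {x. u x \<ge> a} = {x. u x < a}" by auto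
  then have "closed {x. u x \<ge> a}"
    using u unfolding FX_def upper_semicont_def closed_def by simp
  then have "compact (cut u 0 \<inter> {x. u x \<ge> a})" using u unfolding FX_def by (simp add: compact_Int_closed)
  moreover have "cut u 0 \<inter> {x. u x \<ge> a} = cut u a" using FX_cut_sub[of a u] False a0 by (auto simp: cut_def)
  ultimately show ?thesis by simp
qed


lemma FX_bdd: "u \<in> FX \<Longrightarrow> bdd_above (u ` S)"
  unfolding FX_def by (intro bdd_aboveI[where M=1]) auto

lemma zadeh_ge_iff:
  assumes cont: "continuous_on UNIV f" and u: "u \<in> FX" and a: "a > 0"
  shows "zadeh f u y \<ge> a \<longleftrightarrow> (\<exists>x. f x = y \<and> u x \<ge> a)"
proof
  assume "\<exists>x. f x = y \<and> u x \<ge> a"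
  then obtain x where x: "f x = y" "u x \<ge> a" by blast
  then have xin: "x \<in> f -` {y}" by simp
  then have ne: "f -` {y} \<noteq> {}" by blast
  have "u x \<le> (SUP x\<in>f -` {y}. u x)" by (rule cSUP_upper[OF xin FX_bdd[OF u]])
  then have "zadeh f u y \<ge> u x" using ne unfolding zadeh_def by simp
  then show "zadeh f u y \<ge> a" using x(2) by linarith
next
  assume H: "zadeh f u y \<ge> a"
  have ne: "f -` {y} \<noteq> {}"
  proof
    assume "f -` {y} = {}"
    then have "zadeh f u y = 0" unfolding zadeh_def by simp
    then show False using H a by linarith
  qed
  then have S: "(SUP x\<in>f -` {y}. u x) \<ge> a" using H unfolding zadeh_def by simp
  define C where "C = f -` {y} \<inter> cut u 0"
  have "closed (f -` {y})" by (rule closed_vimage[OF closed_singleton cont])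
  moreover have "compact (cut u 0)" using u unfolding FX_def by blast
  ultimately have cC: "compact C" unfolding C_def by (rule closed_Int_compact)
  have pos0: "u x \<le> 0" if "x \<notin> cut u 0" for x
  proof (rule ccontr)
    assume "\<not> u x \<le> 0"
    then have "x \<in> {x. u x > 0}" by simp
    then have "x \<in> closure {x. u x > 0}" using closure_subset[of "{x. u x > 0}"] by (rule subsetD[rotated])
    then show False using that unfolding cut_def by simp
  qed
  show "\<exists>x. f x = y \<and> u x \<ge> a"
  proof (cases "C = {}")
    case True
    have "\<And>x. x \<in> f -` {y} \<Longrightarrow> u x \<le> 0"
    proof -
      fix x assume "x \<in> f -` {y}"
      then have "x \<notin> cut u 0" using True unfolding C_def by blast
      then show "u x \<le> 0" by (rule pos0)
    qed
    then have "(SUP x\<in>f -` {y}. u x) \<le> 0" using ne by (intro cSUP_least) 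
    then show ?thesis using S a by linarith
  next
    case False
    have uu: "upper_semicont u" using u unfolding FX_def by blast
    obtain x0 where x0: "x0 \<in> C" "\<forall>x\<in>C. u x \<le> u x0"
      using usc_max[OF uu cC False] by blast
    have "u x0 \<ge> 0" using u unfolding FX_def by blast
    have "\<And>x. x \<in> f -` {y} \<Longrightarrow> u x \<le> u x0"
    proof -
      fix x assume xp: "x \<in> f -` {y}"
      show "u x \<le> u x0"
      proof (cases "x \<in> cut u 0")
        case True then have "x \<in> C" using xp unfolding C_def by blast
        then show ?thesis using x0(2) by blast
      next
        case False then show ?thesis using pos0[OF False] \<open>u x0 \<ge> 0\<close> by linarith
      qed
    qed
    then have "(SUP x\<in>f -` {y}. u x) \<le> u x0" using ne by (intro cSUP_least)
    moreover have "f x0 = y" using x0(1) unfolding C_def by blast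
    ultimately show ?thesis using S by (intro exI[of _ x0]) simp
  qed
qed

lemma cut_zadeh:
  assumes cont: "continuous_on UNIV f" and u: "u \<in> FX" and a: "a > 0"
  shows "cut (zadeh f u) a = f ` cut u a"
  using zadeh_ge_iff[OF cont u a] a unfolding cut_def by auto

lemma zadeh_range:
  assumes u: "u \<in> FX"
  shows "0 \<le> zadeh f u y \<and> zadeh f u y \<le> 1"
proof (cases "f -` {y} = {}")
  case True then show ?thesis by (simp add: zadeh_def)
next
  case False
  then obtain x where x: "x \<in> f -` {y}" by blast
  have "u x \<le> (SUP x\<in>f -` {y}. u x)" using x by (intro cSUP_upper FX_bdd[OF u])
  moreover have "(SUP x\<in>f -` {y}. u x) \<le> 1" using False u unfolding FX_def by (intro cSUP_least) auto
  moreover have "u x \<ge> 0" using u unfolding FX_def by auto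
  ultimately show ?thesis using False by (simp add: zadeh_def)
qed

lemma zadeh_FX:
  assumes cont: "continuous_on UNIV f" and u: "u \<in> FX"
  shows "zadeh f u \<in> FX"
proof -
  let ?w = "zadeh f u"
  have r: "\<forall>x. 0 \<le> ?w x \<and> ?w x \<le> 1" using zadeh_range[OF u] by blast
  have usc: "upper_semicont ?w"
    unfolding upper_semicont_def
  proof
    fix a :: real
    show "open {x. ?w x < a}"
    proof (cases "a \<le> 0")
      case True
      have "\<not> ?w x < a" for x using r True by (meson not_le order_trans)
      then have "{x. ?w x < a} = {}" by blast
      then show ?thesis by simp
    next
      case False
      have "{x. ?w x < a} = - cut ?w a" using False unfolding cut_def by auto
      also have "\<dots> = - (f ` cut u a)" using cut_zadeh[OF cont u] False by simp
      finally show ?thesis using compact_continuous_image[OF continuous_on_subset[OF cont] FX_cut_compact[OF u, of a]] False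
        by (simp add: compact_imp_closed open_Compl)
    qed
  qed
  have "{x. ?w x > 0} \<subseteq> f ` cut u 0"
  proof
    fix y assume "y \<in> {x. ?w x > 0}"
    then have "?w y \<ge> ?w y" "?w y > 0" by auto
    then obtain x where "f x = y" "u x \<ge> ?w y" using zadeh_ge_iff[OF cont u] by blast
    then have "u x > 0" using \<open>?w y > 0\<close> by simp
    then have "x \<in> cut u 0" unfolding cut_def using closure_subset[of "{x. u x > 0}"] by auto
    then show "y \<in> f ` cut u 0" using \<open>f x = y\<close> by auto
  qed
  moreover have cc: "compact (f ` cut u 0)"
    using compact_continuous_image[OF continuous_on_subset[OF cont] FX_cut_compact[OF u, of 0]] by simp
  ultimately have sub: "cut ?w 0 \<subseteq> f ` cut u 0" unfolding cut_def
    by (simp add: closure_minimal compact_imp_closed)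
  have "compact (f ` cut u 0 \<inter> cut ?w 0)" by (rule compact_Int_closed[OF cc]) (simp add: cut_def)
  moreover have "f ` cut u 0 \<inter> cut ?w 0 = cut ?w 0" using sub by blast
  ultimately have "compact (cut ?w 0)" by simp
  moreover have "cut ?w 1 \<noteq> {}" using cut_zadeh[OF cont u, of 1] u unfolding FX_def by simp
  ultimately show ?thesis using r usc unfolding FX_def by blast
qed

lemma zadeh_iter:
  assumes cont: "continuous_on UNIV f" and u: "u \<in> FX"
  shows "(zadeh f ^^ n) u \<in> FX \<and> (\<forall>a>0. cut ((zadeh f ^^ n) u) a = (f ^^ n) ` cut u a)"
proof (induction n)
  case 0 then show ?case using u by (simp only: funpow_0 image_id) simp
next
  case (Suc n)
  let ?v = "(zadeh f ^^ n) u"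
  have e: "(zadeh f ^^ Suc n) u = zadeh f ?v" by simp
  have "\<forall>a>0. cut (zadeh f ?v) a = (f ^^ Suc n) ` cut u a"
  proof (intro allI impI)
    fix a :: real assume "a > 0"
    have v: "?v \<in> FX" "cut ?v a = (f ^^ n) ` cut u a" using Suc.IH \<open>a > 0\<close> by auto
    have "cut (zadeh f ?v) a = f ` cut ?v a" by (rule cut_zadeh[OF cont v(1) \<open>a > 0\<close>])
    then have "cut (zadeh f ?v) a = f ` ((f ^^ n) ` cut u a)" using v(2) by simp
    also have "\<dots> = (f ^^ Suc n) ` cut u a" by (simp add: image_comp)
    finally show "cut (zadeh f ?v) a = (f ^^ Suc n) ` cut u a" .
  qed
  moreover have "zadeh f ?v \<in> FX" using zadeh_FX[OF cont] Suc.IH by blast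
  ultimately show ?case unfolding e by blast
qed

lemma fbar_iter: "(fbar f ^^ n) K = (f ^^ n) ` K"
proof (induction n)
  case 0 show ?case by simp
next
  case (Suc n)
  have "(fbar f ^^ Suc n) K = f ` ((fbar f ^^ n) K)" by (simp add: fbar_def)
  also have "\<dots> = f ` ((f ^^ n) ` K)" using Suc.IH by simp
  also have "\<dots> = (f ^^ Suc n) ` K" by (simp only: image_comp funpow.simps(2))
  finally show ?case .
qed

lemma cut_Per:
  assumes cont: "continuous_on UNIV f" and v: "v \<in> Per (zadeh f) FX" and a: "0 < a" "a \<le> 1"
  shows "cut v a \<in> Per (fbar f) KX"
proof -
  obtain p where p: "v \<in> FX" "p > 0" "(zadeh f ^^ p) v = v" using v unfolding Per_def by blast
  have "cut ((zadeh f ^^ p) v) a = (f ^^ p) ` cut v a" using zadeh_iter[OF cont p(1), of p] a by blast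
  then have "(f ^^ p) ` cut v a = cut v a" using p(3) by simp
  moreover have "cut v a \<in> KX" using FX_cut_ne[OF p(1) a(2)] FX_cut_compact[OF p(1), of a] a by (simp add: KX_def)
  ultimately show ?thesis using p(2) unfolding Per_def fbar_iter by blast
qed

lemma Tset_facts:
  assumes "\<xi> \<in> Tset"
  shows "\<xi> 0 = 0" "\<xi> 1 = 1" "\<And>a. a \<in> {0..1} \<Longrightarrow> \<xi> a \<in> {0..1}"
    "\<And>a. a \<in> {0..1} \<Longrightarrow> \<xi> a > 0 \<longleftrightarrow> a > 0"
    "\<And>a. a \<in> {0..1} \<Longrightarrow> \<xi> a \<ge> 1 \<longleftrightarrow> a \<ge> 1"
proof -
  have sm: "strict_mono_on {0..1} \<xi>" and im: "\<xi> ` {0..1} = {0..1}" using assms unfolding Tset_def by auto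
  show r: "\<And>a. a \<in> {0..1} \<Longrightarrow> \<xi> a \<in> {0..1}" using im by blast
  obtain a0 where a0: "a0 \<in> {0..1}" "\<xi> a0 = 0" using im by (metis atLeastAtMost_iff imageE order_refl zero_le_one)
  show z: "\<xi> 0 = 0"
  proof (rule ccontr)
    assume "\<xi> 0 \<noteq> 0"
    then have "a0 \<noteq> 0" using a0 by auto
    then have "a0 > 0" using a0 by auto
    then have "\<xi> 0 < \<xi> a0" using strict_mono_onD[OF sm, of 0 a0] a0 by auto
    moreover have "\<xi> 0 \<ge> 0" using r[of 0] by auto
    ultimately show False using a0 by simp
  qed
  obtain a1 where a1: "a1 \<in> {0..1}" "\<xi> a1 = 1" using im by (metis atLeastAtMost_iff imageE order_refl zero_le_one)
  show o: "\<xi> 1 = 1"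
  proof (rule ccontr)
    assume "\<xi> 1 \<noteq> 1"
    then have "a1 \<noteq> 1" using a1 by auto
    then have "a1 < 1" using a1 by auto
    then have "\<xi> a1 < \<xi> 1" using strict_mono_onD[OF sm, of a1 1] a1 by auto
    moreover have "\<xi> 1 \<le> 1" using r[of 1] by auto
    ultimately show False using a1 by simp
  qed
  show "\<xi> a > 0 \<longleftrightarrow> a > 0" if "a \<in> {0..1}" for a
  proof
    assume "\<xi> a > 0" then show "a > 0" using z that by (cases "a = 0") auto
  next
    assume "a > 0" then show "\<xi> a > 0" using strict_mono_onD[OF sm, of 0 a] z that by auto
  qed
  show "\<xi> a \<ge> 1 \<longleftrightarrow> a \<ge> 1" if "a \<in> {0..1}" for a
  proof
    assume h: "\<xi> a \<ge> 1"
    show "a \<ge> 1"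
    proof (rule ccontr)
      assume "\<not> a \<ge> 1"
      then have "\<xi> a < \<xi> 1" using strict_mono_onD[OF sm, of a 1] that by auto
      then show False using h o by simp
    qed
  next
    assume "a \<ge> 1" then have "a = 1" using that by auto
    then show "\<xi> a \<ge> 1" using o by simp
  qed
qed

lemma id_Tset: "(\<lambda>x. x) \<in> Tset"
  unfolding Tset_def by (auto intro: strict_mono_onI)

definition ind :: "'a set \<Rightarrow> 'a \<Rightarrow> real" where
  "ind K x = (if x \<in> K then 1 else 0)"

lemma ind_cut: "K \<in> KX \<Longrightarrow> a \<in> {0..1} \<Longrightarrow> cut (ind K) a = K"
proof -
  assume K: "K \<in> KX" and a: "a \<in> {0..1}"
  have cl: "closed K" using K unfolding KX_def by (simp add: compact_imp_closed)
  show ?thesis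
  proof (cases "a = 0")
    case True
    have "{x. ind K x > 0} = K" by (auto simp: ind_def)
    then show ?thesis using True cl by (simp add: cut_def)
  next
    case False
    then have "a > 0" using a by auto
    then have "{x. ind K x \<ge> a} = K" using a by (auto simp: ind_def)
    then show ?thesis using False by (simp add: cut_def)
  qed
qed

lemma ind_FX: "K \<in> KX \<Longrightarrow> ind K \<in> FX"
proof -
  assume K: "K \<in> KX"
  have cl: "closed K" using K unfolding KX_def by (simp add: compact_imp_closed)
  have usc: "upper_semicont (ind K)" unfolding upper_semicont_def
  proof
    fix a :: real
    show "open {x. ind K x < a}"
    proof (cases "a \<le> 0")
      case True then have "{x. ind K x < a} = {}" by (auto simp: ind_def)
      then show ?thesis by simp
    next
      case False
      show ?thesis
      proof (cases "a \<le> 1")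
        case True then have "{x. ind K x < a} = - K" using False by (auto simp: ind_def)
        then show ?thesis using cl by (simp add: open_Compl)
      next
        case F2: False then have "{x. ind K x < a} = UNIV" by (auto simp: ind_def)
        then show ?thesis by simp
      qed
    qed
  qed
  show ?thesis unfolding FX_def using usc ind_cut[OF K, of 0] ind_cut[OF K, of 1] K
    by (auto simp: ind_def KX_def)
qed

lemma dH_bound:
  assumes "A \<noteq> {}" "B \<noteq> {}" "A \<subseteq> S" "B \<subseteq> S" "\<forall>x\<in>S. \<forall>y\<in>S. dist x y \<le> M"
  shows "dH A B \<le> M"
  unfolding dH_def
proof (rule hdist_le[OF assms(1,2)])
  obtain a0 where a0: "a0 \<in> A" using assms(1) by blast
  obtain b0 where b0: "b0 \<in> B" using assms(2) by blast
  show "\<forall>a\<in>A. \<exists>b\<in>B. dist a b \<le> M" using b0 assms(3-5) by blast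
  show "\<forall>b\<in>B. \<exists>a\<in>A. dist a b \<le> M" using a0 assms(3-5) by blast
qed simp

lemma dH_le_d_inf:
  assumes S: "bounded S" and cu: "\<forall>a\<in>{0..1}. cut u a \<noteq> {} \<and> cut u a \<subseteq> S \<and> cut w a \<noteq> {} \<and> cut w a \<subseteq> S"
    and a: "a \<in> {0..1}"
  shows "dH (cut u a) (cut w a) \<le> d_inf u w"
proof -
  obtain M where M: "\<forall>x\<in>S. \<forall>y\<in>S. dist x y \<le> M" using S bounded_two_points by blast
  have "bdd_above ((\<lambda>a. dH (cut u a) (cut w a)) ` {0..1})"
  proof (rule bdd_aboveI[where M=M])
    fix z assume "z \<in> (\<lambda>a. dH (cut u a) (cut w a)) ` {0..1}"
    then obtain b where b: "b \<in> {0..1}" "z = dH (cut u b) (cut w b)" by blast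
    show "z \<le> M" unfolding b(2) using cu b(1) M by (intro dH_bound) auto
  qed
  then show ?thesis unfolding d_inf_def by (rule cSUP_upper[OF a])
qed

lemma FX_cut_props:
  assumes "u \<in> FX" "a \<in> {0..1}"
  shows "cut u a \<noteq> {}" "cut u a \<subseteq> cut u 0"
  using FX_cut_ne[of u a] FX_cut_sub[of a u] assms by auto

lemma comp_cut:
  assumes v: "v \<in> FX" and xi: "\<xi> \<in> Tset"
  shows "\<And>a. a \<in> {0..1} \<Longrightarrow> cut (\<xi> \<circ> v) a \<noteq> {} \<and> cut (\<xi> \<circ> v) a \<subseteq> cut v 0"
    and "cut (\<xi> \<circ> v) 1 = cut v 1"
proof -
  have vr: "\<And>x. v x \<in> {0..1}" using v unfolding FX_def by auto
  note T = Tset_facts[OF xi]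
  have pos: "\<And>x. \<xi> (v x) > 0 \<longleftrightarrow> v x > 0" using T(4) vr by blast
  have one: "\<And>x. \<xi> (v x) \<ge> 1 \<longleftrightarrow> v x \<ge> 1" using T(5) vr by blast
  show "cut (\<xi> \<circ> v) 1 = cut v 1" using one by (simp add: cut_def)
  fix a :: real assume a: "a \<in> {0..1}"
  obtain x1 where x1: "x1 \<in> cut v 1" using v unfolding FX_def by blast
  then have "v x1 \<ge> 1" by (simp add: cut_def)
  then have "x1 \<in> cut (\<xi> \<circ> v) 1" using one by (simp add: cut_def)
  then have ne: "cut (\<xi> \<circ> v) a \<noteq> {}" using FX_cut1_sub[of a "\<xi> \<circ> v"] a by auto
  have eq0: "{x. (\<xi> \<circ> v) x > 0} = {x. v x > 0}" using pos by auto
  have "cut (\<xi> \<circ> v) a \<subseteq> cut v 0"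
  proof (cases "a = 0")
    case True then show ?thesis using eq0 by (simp add: cut_def)
  next
    case False
    then have "cut (\<xi> \<circ> v) a \<subseteq> cut (\<xi> \<circ> v) 0" using FX_cut_sub[of a "\<xi> \<circ> v"] a by auto
    also have "\<dots> = cut v 0" using eq0 by (simp add: cut_def)
    finally show ?thesis .
  qed
  then show "cut (\<xi> \<circ> v) a \<noteq> {} \<and> cut (\<xi> \<circ> v) a \<subseteq> cut v 0" using ne by blast
qed

lemma Per_sub: "Per g S \<subseteq> S" unfolding Per_def by blast

lemma d0_to_K:
  assumes cont: "continuous_on UNIV f" and D: "dense_wrt d_0 FX (Per (zadeh f) FX)"
  shows "dense_wrt dH KX (Per (fbar f) KX)"
  unfolding dense_wrt_def
proof (intro conjI ballI allI impI)
  show "Per (fbar f) KX \<subseteq> KX" by (rule Per_sub)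
  fix K :: "'a set" and e :: real assume K: "K \<in> KX" and e: "e > 0"
  have u: "ind K \<in> FX" by (rule ind_FX[OF K])
  obtain v where v: "v \<in> Per (zadeh f) FX" "d_0 (ind K) v < e" using D u e unfolding dense_wrt_def by blast
  have vF: "v \<in> FX" by (rule subsetD[OF Per_sub v(1)])
  define E where "E = {\<epsilon>. \<epsilon> > 0 \<and> (\<exists>\<xi>\<in>Tset. (SUP \<alpha>\<in>{0..1}. \<bar>\<xi> \<alpha> - \<alpha>\<bar>) \<le> \<epsilon> \<and> d_inf (ind K) (\<xi> \<circ> v) \<le> \<epsilon>)}"
  have "\<bar>d_inf (ind K) v\<bar> + 1 \<in> E" unfolding E_def
    using id_Tset by (intro CollectI conjI bexI[of _ "\<lambda>x. x"]) (auto simp: o_def)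
  then have "E \<noteq> {}" by blast
  moreover have "Inf E < e" using v(2) unfolding d_0_def E_def by simp
  ultimately obtain \<epsilon> where "\<epsilon> \<in> E" "\<epsilon> < e" using cInf_lessD by blast
  then obtain \<xi> where xi: "\<xi> \<in> Tset" "d_inf (ind K) (\<xi> \<circ> v) \<le> \<epsilon>" unfolding E_def by blast
  let ?S = "cut (ind K) 0 \<union> cut v 0"
  have bS: "bounded ?S" using FX_cut_compact[OF u, of 0] FX_cut_compact[OF vF, of 0]
    by (simp add: compact_imp_bounded)
  have cu: "\<forall>a\<in>{0..1}. cut (ind K) a \<noteq> {} \<and> cut (ind K) a \<subseteq> ?S \<and> cut (\<xi> \<circ> v) a \<noteq> {} \<and> cut (\<xi> \<circ> v) a \<subseteq> ?S"
    using FX_cut_props[OF u] comp_cut(1)[OF vF xi(1)] by blast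
  have "dH (cut (ind K) 1) (cut (\<xi> \<circ> v) 1) \<le> d_inf (ind K) (\<xi> \<circ> v)"
    by (rule dH_le_d_inf[OF bS cu]) simp
  moreover have "cut (ind K) 1 = K" using ind_cut[OF K] by simp
  moreover have "cut (\<xi> \<circ> v) 1 = cut v 1" by (rule comp_cut(2)[OF vF xi(1)])
  ultimately have "dH K (cut v 1) < e" using xi(2) \<open>\<epsilon> < e\<close> by simp
  moreover have "cut v 1 \<in> Per (fbar f) KX" by (rule cut_Per[OF cont v(1)]) auto
  ultimately show "\<exists>P\<in>Per (fbar f) KX. dH K P < e" by blast
qed

lemma d0_le_dinf:
  assumes "e > 0" "d_inf u v < e"
  shows "d_0 u v < e"
proof -
  define E where "E = {\<epsilon>. \<epsilon> > 0 \<and> (\<exists>\<xi>\<in>Tset. (SUP \<alpha>\<in>{0..1}. \<bar>\<xi> \<alpha> - \<alpha>\<bar>) \<le> \<epsilon> \<and> d_inf u (\<xi> \<circ> v) \<le> \<epsilon>)}"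
  have "max (d_inf u v) (e/2) \<in> E" unfolding E_def
    using id_Tset assms by (intro CollectI conjI bexI[of _ "\<lambda>x. x"]) (auto simp: o_def)
  moreover have "bdd_below E" unfolding E_def by (intro bdd_belowI[where m=0]) auto
  ultimately have "Inf E \<le> max (d_inf u v) (e/2)" by (rule cInf_lower)
  also have "\<dots> < e" using assms by simp
  finally show ?thesis unfolding d_0_def E_def .
qed

definition W :: "'i set \<Rightarrow> ('i \<Rightarrow> real) \<Rightarrow> ('i \<Rightarrow> 'b set) \<Rightarrow> 'b \<Rightarrow> real" where
  "W F t Q y = Max (insert 0 (t ` {i\<in>F. y \<in> Q i}))"

lemma W_ge: "finite F \<Longrightarrow> i \<in> F \<Longrightarrow> y \<in> Q i \<Longrightarrow> t i \<le> W F t Q y"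
  unfolding W_def by (rule Max_ge) auto

lemma W_nonneg: "finite F \<Longrightarrow> 0 \<le> W F t Q y"
  unfolding W_def by (rule Max_ge) auto

lemma W_cases: "finite F \<Longrightarrow> W F t Q y = 0 \<or> (\<exists>i\<in>F. y \<in> Q i \<and> W F t Q y = t i)"
proof -
  assume F: "finite F"
  have "Max (insert 0 (t ` {i\<in>F. y \<in> Q i})) \<in> insert 0 (t ` {i\<in>F. y \<in> Q i})"
    using F by (intro Max_in) auto
  then show ?thesis unfolding W_def by blast
qed

lemma W_pos: "finite F \<Longrightarrow> W F t Q y > 0 \<Longrightarrow> \<exists>i\<in>F. y \<in> Q i \<and> W F t Q y = t i"
  using W_cases[of F t Q y] by auto

lemma W_le1: "finite F \<Longrightarrow> \<forall>i\<in>F. t i \<le> 1 \<Longrightarrow> W F t Q y \<le> 1"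
  using W_cases[of F t Q y] by auto

lemma W_mono: "finite F \<Longrightarrow> {i\<in>F. x \<in> Q i} \<subseteq> {i\<in>F. y \<in> R i} \<Longrightarrow> W F t Q x \<le> W F t R y"
  unfolding W_def by (rule Max_mono) auto

lemma zadeh_W:
  assumes F: "finite F"
  shows "zadeh f (W F t Q) = W F t (\<lambda>i. f ` Q i)"
proof
  fix y
  show "zadeh f (W F t Q) y = W F t (\<lambda>i. f ` Q i) y"
  proof (cases "f -` {y} = {}")
    case True
    then have e: "{i\<in>F. y \<in> f ` Q i} = {}" by auto
    have "W F t (\<lambda>i. f ` Q i) y = 0" unfolding W_def e by simp
    moreover have "zadeh f (W F t Q) y = 0" using True unfolding zadeh_def by simp
    ultimately show ?thesis by simp
  next
    case False
    have bd: "bdd_above (W F t Q ` f -` {y})"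
    proof (rule bdd_aboveI[where M="W F t (\<lambda>i. f ` Q i) y"])
      fix z assume "z \<in> W F t Q ` f -` {y}"
      then obtain x where x: "f x = y" "z = W F t Q x" by auto
      show "z \<le> W F t (\<lambda>i. f ` Q i) y" unfolding x(2) using x(1) by (intro W_mono[OF F]) auto
    qed
    have le: "(SUP x\<in>f -` {y}. W F t Q x) \<le> W F t (\<lambda>i. f ` Q i) y"
    proof (rule cSUP_least[OF False])
      fix x assume "x \<in> f -` {y}"
      then show "W F t Q x \<le> W F t (\<lambda>i. f ` Q i) y" by (intro W_mono[OF F]) auto
    qed
    have ge: "W F t (\<lambda>i. f ` Q i) y \<le> (SUP x\<in>f -` {y}. W F t Q x)"
    proof (cases "W F t (\<lambda>i. f ` Q i) y = 0")
      case True
      obtain x where x: "x \<in> f -` {y}" using False by blast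
      have "0 \<le> W F t Q x" by (rule W_nonneg[OF F])
      also have "\<dots> \<le> (SUP x\<in>f -` {y}. W F t Q x)" by (rule cSUP_upper[OF x bd])
      finally show ?thesis using True by simp
    next
      case F2: False
      then obtain i where i: "i \<in> F" "y \<in> f ` Q i" "W F t (\<lambda>i. f ` Q i) y = t i"
        using W_cases[OF F, of t "\<lambda>i. f ` Q i" y] by auto
      then obtain x where x: "x \<in> Q i" "f x = y" by auto
      have "t i \<le> W F t Q x" by (rule W_ge[of F i x Q t, OF F i(1) x(1)])
      also have "\<dots> \<le> (SUP x\<in>f -` {y}. W F t Q x)" using x(2) by (intro cSUP_upper[OF _ bd]) auto
      finally show ?thesis using i(3) by simp
    qed
    show ?thesis using False le ge unfolding zadeh_def by simp
  qed
qed

lemma zadeh_W_iter: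
  assumes F: "finite F"
  shows "(zadeh f ^^ n) (W F t Q) = W F t (\<lambda>i. (f ^^ n) ` Q i)"
proof (induction n)
  case 0 show ?case by simp
next
  case (Suc n)
  have "(zadeh f ^^ Suc n) (W F t Q) = zadeh f ((zadeh f ^^ n) (W F t Q))" by simp
  also have "\<dots> = W F t (\<lambda>i. f ` ((f ^^ n) ` Q i))" using Suc.IH zadeh_W[OF F] by simp
  also have "(\<lambda>i. f ` ((f ^^ n) ` Q i)) = (\<lambda>i. (f ^^ Suc n) ` Q i)" by (simp only: image_comp funpow.simps(2))
  finally show ?case .
qed

definition close :: "('a::metric_space \<Rightarrow> real) \<Rightarrow> ('a \<Rightarrow> real) \<Rightarrow> real \<Rightarrow> bool" where
  "close u v c \<longleftrightarrow> (\<forall>a\<in>{0..1}. (\<forall>x\<in>cut u a. \<exists>y\<in>cut v a. dist x y \<le> c) \<and> (\<forall>y\<in>cut v a. \<exists>x\<in>cut u a. dist x y \<le> c))"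

lemma close_dinf:
  assumes u: "u \<in> FX" and v: "v \<in> FX" and cl: "close u v c"
  shows "d_inf u v \<le> c"
  unfolding d_inf_def
proof (rule cSUP_least)
  show "{0..1::real} \<noteq> {}" by simp
  fix a :: real assume a: "a \<in> {0..1}"
  show "dH (cut u a) (cut v a) \<le> c" unfolding dH_def
    by (rule hdist_le) (use FX_cut_props(1)[OF u a] FX_cut_props(1)[OF v a] cl a in \<open>auto simp: close_def\<close>)
qed

lemma dbar_nonneg: "dbar p q \<ge> 0"
  unfolding dbar_def by simp

lemma close_dE:
  assumes u: "u \<in> FX" and v: "v \<in> FX" and cl: "close u v c" and c: "c \<ge> 0"
  shows "d_E u v \<le> c"
  unfolding d_E_def
proof (rule hdist_le)
  have ur: "\<And>x. 0 \<le> u x" using u unfolding FX_def by auto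
  have vr: "\<And>x. 0 \<le> v x" using v unfolding FX_def by auto
  have "(undefined, 0) \<in> endo u" using ur unfolding endo_def by auto
  then show "endo u \<noteq> {}" by blast
  have "(undefined, 0) \<in> endo v" using vr unfolding endo_def by auto
  then show "endo v \<noteq> {}" by blast
  show "\<And>a b. 0 \<le> dbar a b" by (rule dbar_nonneg)
  show "\<forall>a\<in>endo u. \<exists>b\<in>endo v. dbar a b \<le> c"
  proof
    fix p assume p: "p \<in> endo u"
    then obtain x \<alpha> where p': "p = (x, \<alpha>)" "\<alpha> \<in> {0..1}" "u x \<ge> \<alpha>" unfolding endo_def by auto
    show "\<exists>b\<in>endo v. dbar p b \<le> c"
    proof (cases "\<alpha> = 0")
      case True
      have "(x, 0) \<in> endo v" using vr unfolding endo_def by auto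
      moreover have "dbar p (x, 0) \<le> c" using p' True c by (simp add: dbar_def)
      ultimately show ?thesis by blast
    next
      case False
      then have "x \<in> cut u \<alpha>" using p' by (simp add: cut_def)
      then obtain y where y: "y \<in> cut v \<alpha>" "dist x y \<le> c" using cl p'(2) unfolding close_def by blast
      then have "(y, \<alpha>) \<in> endo v" using False p'(2) unfolding endo_def cut_def by auto
      moreover have "dbar p (y, \<alpha>) \<le> c" using p' y(2) by (simp add: dbar_def)
      ultimately show ?thesis by blast
    qed
  qed
  show "\<forall>b\<in>endo v. \<exists>a\<in>endo u. dbar a b \<le> c"
  proof
    fix p assume p: "p \<in> endo v"
    then obtain y \<alpha> where p': "p = (y, \<alpha>)" "\<alpha> \<in> {0..1}" "v y \<ge> \<alpha>" unfolding endo_def by auto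
    show "\<exists>a\<in>endo u. dbar a p \<le> c"
    proof (cases "\<alpha> = 0")
      case True
      have "(y, 0) \<in> endo u" using ur unfolding endo_def by auto
      moreover have "dbar (y, 0) p \<le> c" using p' True c by (simp add: dbar_def)
      ultimately show ?thesis by blast
    next
      case False
      then have "y \<in> cut v \<alpha>" using p' by (simp add: cut_def)
      then obtain x where x: "x \<in> cut u \<alpha>" "dist x y \<le> c" using cl p'(2) unfolding close_def by blast
      then have "(x, \<alpha>) \<in> endo u" using False p'(2) unfolding endo_def cut_def by auto
      moreover have "dbar (x, \<alpha>) p \<le> c" using p' x(2) by (simp add: dbar_def)
      ultimately show ?thesis by blast
    qed
  qed
qed

lemma sendo_cut:
  assumes u: "u \<in> FX" and p: "(x, \<alpha>) \<in> sendo u"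
  shows "x \<in> cut u \<alpha>" "\<alpha> \<in> {0..1}"
proof -
  have h: "x \<in> cut u 0" "\<alpha> \<in> {0..1}" "u x \<ge> \<alpha>" using p unfolding sendo_def endo_def by auto
  show "\<alpha> \<in> {0..1}" by (rule h(2))
  show "x \<in> cut u \<alpha>" using h by (cases "\<alpha> = 0") (auto simp: cut_def)
qed

lemma cut_sendo:
  assumes u: "u \<in> FX" and a: "\<alpha> \<in> {0..1}" and x: "x \<in> cut u \<alpha>"
  shows "(x, \<alpha>) \<in> sendo u"
proof -
  have x0: "x \<in> cut u 0" using FX_cut_sub[of \<alpha> u] a x by auto
  have "u x \<ge> \<alpha>"
  proof (cases "\<alpha> = 0")
    case True then show ?thesis using u unfolding FX_def by auto
  next
    case False then show ?thesis using x by (simp add: cut_def)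
  qed
  then show ?thesis using x0 a unfolding sendo_def endo_def by auto
qed

lemma close_dS:
  assumes u: "u \<in> FX" and v: "v \<in> FX" and cl: "close u v c"
  shows "d_S u v \<le> c"
  unfolding d_S_def
proof (rule hdist_le)
  obtain x1 where x1: "x1 \<in> cut u 1" using u unfolding FX_def by blast
  obtain y1 where y1: "y1 \<in> cut v 1" using v unfolding FX_def by blast
  show "sendo u \<noteq> {}" using cut_sendo[OF u _ x1] by auto
  show "sendo v \<noteq> {}" using cut_sendo[OF v _ y1] by auto
  show "\<And>a b. 0 \<le> dbar a b" by (rule dbar_nonneg)
  show "\<forall>a\<in>sendo u. \<exists>b\<in>sendo v. dbar a b \<le> c"
  proof
    fix p assume p: "p \<in> sendo u"
    obtain x \<alpha> where p': "p = (x, \<alpha>)" by (cases p)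
    have xa: "x \<in> cut u \<alpha>" "\<alpha> \<in> {0..1}" using sendo_cut[OF u] p p' by auto
    then obtain y where y: "y \<in> cut v \<alpha>" "dist x y \<le> c" using cl unfolding close_def by blast
    have "(y, \<alpha>) \<in> sendo v" by (rule cut_sendo[OF v xa(2) y(1)])
    moreover have "dbar p (y, \<alpha>) \<le> c" using p' y(2) by (simp add: dbar_def)
    ultimately show "\<exists>b\<in>sendo v. dbar p b \<le> c" by blast
  qed
  show "\<forall>b\<in>sendo v. \<exists>a\<in>sendo u. dbar a b \<le> c"
  proof
    fix p assume p: "p \<in> sendo v"
    obtain y \<alpha> where p': "p = (y, \<alpha>)" by (cases p)
    have ya: "y \<in> cut v \<alpha>" "\<alpha> \<in> {0..1}" using sendo_cut[OF v] p p' by auto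
    then obtain x where x: "x \<in> cut u \<alpha>" "dist x y \<le> c" using cl unfolding close_def by blast
    have "(x, \<alpha>) \<in> sendo u" by (rule cut_sendo[OF u ya(2) x(1)])
    moreover have "dbar (x, \<alpha>) p \<le> c" using p' x(2) by (simp add: dbar_def)
    ultimately show "\<exists>a\<in>sendo u. dbar a p \<le> c" by blast
  qed
qed

lemma core:
  assumes K: "K \<in> KX" and v: "v \<in> FX" and c: "c \<le> 1/4"
    and A1: "\<forall>x\<in>K. (x, 1) \<in> A" and A2: "\<forall>x \<gamma>. (x, \<gamma>) \<in> A \<longrightarrow> \<gamma> > 0 \<longrightarrow> x \<in> K"
    and B1: "\<forall>y\<in>cut v (1/2). (y, 1/2) \<in> B" and B2: "\<forall>y \<beta>. (y, \<beta>) \<in> B \<longrightarrow> v y \<ge> \<beta>"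
    and H1: "\<forall>a\<in>A. \<exists>b\<in>B. dbar a b < c" and H2: "\<forall>b\<in>B. \<exists>a\<in>A. dbar a b < c"
  shows "dH K (cut v (1/2)) \<le> c"
  unfolding dH_def
proof (rule hdist_le)
  show "K \<noteq> {}" using K unfolding KX_def by blast
  show "cut v (1/2) \<noteq> {}" using FX_cut_ne[OF v] by simp
  show "\<And>a b. 0 \<le> dist a b" by simp
  show "\<forall>a\<in>K. \<exists>b\<in>cut v (1/2). dist a b \<le> c"
  proof
    fix x assume x: "x \<in> K"
    then obtain b where b: "b \<in> B" "dbar (x, 1) b < c" using A1 H1 by blast
    obtain y \<beta> where yb: "b = (y, \<beta>)" by (cases b)
    have "dist x y < c" "\<bar>1 - \<beta>\<bar> < c" using b(2) yb by (auto simp: dbar_def)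
    moreover have "v y \<ge> \<beta>" using B2 b(1) yb by blast
    ultimately have "v y \<ge> 1/2" "dist x y \<le> c" using c by auto
    then show "\<exists>b\<in>cut v (1/2). dist x b \<le> c" by (intro bexI[of _ y]) (auto simp: cut_def)
  qed
  show "\<forall>b\<in>cut v (1/2). \<exists>a\<in>K. dist a b \<le> c"
  proof
    fix y assume y: "y \<in> cut v (1/2)"
    then obtain a where a: "a \<in> A" "dbar a (y, 1/2) < c" using B1 H2 by blast
    obtain x \<gamma> where xg: "a = (x, \<gamma>)" by (cases a)
    have "dist x y < c" "\<bar>\<gamma> - 1/2\<bar> < c" using a(2) xg by (auto simp: dbar_def)
    then have "\<gamma> > 0" using c by auto
    then have "x \<in> K" using A2 a(1) xg by blast
    then show "\<exists>a\<in>K. dist a y \<le> c" using \<open>dist x y < c\<close> by (intro bexI[of _ x]) auto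
  qed
qed

lemma bdd_inf1:
  fixes D :: "'a \<Rightarrow> 'b \<Rightarrow> real"
  assumes "B \<noteq> {}" "\<And>a b. D a b \<ge> 0" "\<forall>a\<in>A. \<exists>b\<in>B. D a b \<le> M"
  shows "bdd_above ((\<lambda>a. INF b\<in>B. D a b) ` A)"
proof (rule bdd_aboveI[where M=M])
  fix z assume "z \<in> (\<lambda>a. INF b\<in>B. D a b) ` A"
  then obtain a where a: "a \<in> A" "z = (INF b\<in>B. D a b)" by blast
  obtain b where b: "b \<in> B" "D a b \<le> M" using assms(3) a(1) by blast
  have bb: "bdd_below ((D a) ` B)" using assms(2) by (intro bdd_belowI[where m=0]) auto
  have "(INF b\<in>B. D a b) \<le> M" by (rule cINF_lower2[OF bb b(1) b(2)])
  then show "z \<le> M" using a(2) by simp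
qed

lemma bdd_inf2:
  fixes D :: "'a \<Rightarrow> 'b \<Rightarrow> real"
  assumes "A \<noteq> {}" "\<And>a b. D a b \<ge> 0" "\<forall>b\<in>B. \<exists>a\<in>A. D a b \<le> M"
  shows "bdd_above ((\<lambda>b. INF a\<in>A. D a b) ` B)"
proof (rule bdd_aboveI[where M=M])
  fix z assume "z \<in> (\<lambda>b. INF a\<in>A. D a b) ` B"
  then obtain b where b: "b \<in> B" "z = (INF a\<in>A. D a b)" by blast
  obtain a where a: "a \<in> A" "D a b \<le> M" using assms(3) b(1) by blast
  have bb: "bdd_below ((\<lambda>a. D a b) ` A)" using assms(2) by (intro bdd_belowI[where m=0]) auto
  have "(INF a\<in>A. D a b) \<le> M" by (rule cINF_lower2[OF bb a(1)]) (use a(2) in simp)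
  then show "z \<le> M" using b(2) by simp
qed

lemma dE_to_K:
  assumes cont: "continuous_on UNIV f" and D: "dense_wrt d_E FX (Per (zadeh f) FX)"
  shows "dense_wrt dH KX (Per (fbar f) KX)"
  unfolding dense_wrt_def
proof (intro conjI ballI allI impI)
  show "Per (fbar f) KX \<subseteq> KX" by (rule Per_sub)
  fix K :: "'a set" and e :: real assume K: "K \<in> KX" and e: "e > 0"
  have u: "ind K \<in> FX" by (rule ind_FX[OF K])
  define c where "c = min (e/2) (1/4)"
  have c: "c > 0" "c \<le> 1/4" "c < e" using e unfolding c_def by auto
  obtain v where v: "v \<in> Per (zadeh f) FX" "d_E (ind K) v < c" using D u c(1) unfolding dense_wrt_def by blast
  have vF: "v \<in> FX" by (rule subsetD[OF Per_sub v(1)])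
  have ur: "\<And>x. 0 \<le> ind K x" by (simp add: ind_def)
  have vr: "\<And>x. 0 \<le> v x" using vF unfolding FX_def by auto
  have "(undefined, 0) \<in> endo (ind K)" using ur unfolding endo_def by auto
  then have ne1: "endo (ind K) \<noteq> {}" by blast
  have "(undefined, 0) \<in> endo v" using vr unfolding endo_def by auto
  then have ne2: "endo v \<noteq> {}" by blast
  have b1: "\<forall>a\<in>endo (ind K). \<exists>b\<in>endo v. dbar a b \<le> 1"
  proof
    fix a assume "a \<in> endo (ind K)"
    then obtain x \<alpha> where "a = (x, \<alpha>)" "\<alpha> \<in> {0..1}" unfolding endo_def by auto
    moreover have "(x, 0) \<in> endo v" using vr unfolding endo_def by auto
    ultimately show "\<exists>b\<in>endo v. dbar a b \<le> 1" by (intro bexI[of _ "(x, 0)"]) (auto simp: dbar_def)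
  qed
  have b2: "\<forall>b\<in>endo v. \<exists>a\<in>endo (ind K). dbar a b \<le> 1"
  proof
    fix b assume "b \<in> endo v"
    then obtain x \<alpha> where "b = (x, \<alpha>)" "\<alpha> \<in> {0..1}" unfolding endo_def by auto
    moreover have "(x, 0) \<in> endo (ind K)" using ur unfolding endo_def by auto
    ultimately show "\<exists>a\<in>endo (ind K). dbar a b \<le> 1" by (intro bexI[of _ "(x, 0)"]) (auto simp: dbar_def)
  qed
  have H: "(\<forall>a\<in>endo (ind K). \<exists>b\<in>endo v. dbar a b < c) \<and> (\<forall>b\<in>endo v. \<exists>a\<in>endo (ind K). dbar a b < c)"
    using v(2) unfolding d_E_def
    by (intro hdist_lt[OF ne1 ne2 dbar_nonneg bdd_inf1[OF ne2 dbar_nonneg b1] bdd_inf2[OF ne1 dbar_nonneg b2]])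
  have "dH K (cut v (1/2)) \<le> c"
  proof (rule core[OF K vF c(2)])
    show "\<forall>x\<in>K. (x, 1) \<in> endo (ind K)" by (auto simp: endo_def ind_def)
    show "\<forall>x \<gamma>. (x, \<gamma>) \<in> endo (ind K) \<longrightarrow> \<gamma> > 0 \<longrightarrow> x \<in> K"
      by (auto simp: endo_def ind_def split: if_splits)
    show "\<forall>y\<in>cut v (1/2). (y, 1/2) \<in> endo v" by (auto simp: endo_def cut_def)
    show "\<forall>y \<beta>. (y, \<beta>) \<in> endo v \<longrightarrow> v y \<ge> \<beta>" by (auto simp: endo_def)
  qed (use H in blast)+
  moreover have "cut v (1/2) \<in> Per (fbar f) KX" by (rule cut_Per[OF cont v(1)]) auto
  ultimately show "\<exists>P\<in>Per (fbar f) KX. dH K P < e" using c(3) by force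
qed

lemma dS_to_K:
  assumes cont: "continuous_on UNIV f" and D: "dense_wrt d_S FX (Per (zadeh f) FX)"
  shows "dense_wrt dH KX (Per (fbar f) KX)"
  unfolding dense_wrt_def
proof (intro conjI ballI allI impI)
  show "Per (fbar f) KX \<subseteq> KX" by (rule Per_sub)
  fix K :: "'a set" and e :: real assume K: "K \<in> KX" and e: "e > 0"
  have u: "ind K \<in> FX" by (rule ind_FX[OF K])
  define c where "c = min (e/2) (1/4)"
  have c: "c > 0" "c \<le> 1/4" "c < e" using e unfolding c_def by auto
  obtain v where v: "v \<in> Per (zadeh f) FX" "d_S (ind K) v < c" using D u c(1) unfolding dense_wrt_def by blast
  have vF: "v \<in> FX" by (rule subsetD[OF Per_sub v(1)])
  obtain x1 where x1: "x1 \<in> cut (ind K) 1" using u unfolding FX_def by blast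
  obtain y1 where y1: "y1 \<in> cut v 1" using vF unfolding FX_def by blast
  have s1: "(x1, 1) \<in> sendo (ind K)" by (rule cut_sendo[OF u _ x1]) simp
  have s2: "(y1, 1) \<in> sendo v" by (rule cut_sendo[OF vF _ y1]) simp
  have ne1: "sendo (ind K) \<noteq> {}" using s1 by blast
  have ne2: "sendo v \<noteq> {}" using s2 by blast
  let ?S = "cut (ind K) 0 \<union> cut v 0"
  have bS: "bounded ?S" using FX_cut_compact[OF u, of 0] FX_cut_compact[OF vF, of 0]
    by (simp add: compact_imp_bounded)
  obtain M where M: "\<forall>x\<in>?S. \<forall>y\<in>?S. dist x y \<le> M" using bS bounded_two_points by blast
  have allb: "dbar p q \<le> max M 1" if "p \<in> sendo (ind K)" "q \<in> sendo v" for p q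
  proof -
    obtain x \<alpha> where p: "p = (x, \<alpha>)" by (cases p)
    obtain y \<beta> where q: "q = (y, \<beta>)" by (cases q)
    have "x \<in> ?S" "\<alpha> \<in> {0..1}" using that(1) p unfolding sendo_def by auto
    moreover have "y \<in> ?S" "\<beta> \<in> {0..1}" using that(2) q unfolding sendo_def by auto
    ultimately have "dist x y \<le> M" "\<bar>\<alpha> - \<beta>\<bar> \<le> 1" using M by auto
    then show ?thesis unfolding p q dbar_def by auto
  qed
  have b1: "\<forall>a\<in>sendo (ind K). \<exists>b\<in>sendo v. dbar a b \<le> max M 1" using allb s2 by blast
  have b2: "\<forall>b\<in>sendo v. \<exists>a\<in>sendo (ind K). dbar a b \<le> max M 1" using allb s1 by blast
  have H: "(\<forall>a\<in>sendo (ind K). \<exists>b\<in>sendo v. dbar a b < c) \<and> (\<forall>b\<in>sendo v. \<exists>a\<in>sendo (ind K). dbar a b < c)"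
    using v(2) unfolding d_S_def
    by (intro hdist_lt[OF ne1 ne2 dbar_nonneg bdd_inf1[OF ne2 dbar_nonneg b1] bdd_inf2[OF ne1 dbar_nonneg b2]])
  have "dH K (cut v (1/2)) \<le> c"
  proof (rule core[OF K vF c(2)])
    show "\<forall>x\<in>K. (x, 1) \<in> sendo (ind K)"
    proof
      fix x assume "x \<in> K"
      then have "x \<in> cut (ind K) 1" using ind_cut[OF K, of 1] by simp
      then show "(x, 1) \<in> sendo (ind K)" by (rule cut_sendo[OF u, rotated]) simp
    qed
    show "\<forall>x \<gamma>. (x, \<gamma>) \<in> sendo (ind K) \<longrightarrow> \<gamma> > 0 \<longrightarrow> x \<in> K"
      by (auto simp: sendo_def endo_def ind_def split: if_splits)
    show "\<forall>y\<in>cut v (1/2). (y, 1/2) \<in> sendo v"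
      using cut_sendo[OF vF, of "1/2"] by simp
    show "\<forall>y \<beta>. (y, \<beta>) \<in> sendo v \<longrightarrow> v y \<ge> \<beta>" by (auto simp: sendo_def endo_def)
  qed (use H in blast)+
  moreover have "cut v (1/2) \<in> Per (fbar f) KX" by (rule cut_Per[OF cont v(1)]) auto
  ultimately show "\<exists>P\<in>Per (fbar f) KX. dH K P < e" using c(3) by force
qed

lemma singleton_near:
  assumes P: "P \<in> KX" and d: "dH {x} P < e"
  shows "\<forall>y\<in>P. dist x y < e"
proof
  fix y assume y: "y \<in> P"
  have "bounded (insert x P)" using P unfolding KX_def by (simp add: compact_imp_bounded)
  then obtain M where M: "\<forall>a\<in>insert x P. \<forall>b\<in>insert x P. dist a b \<le> M" using bounded_two_points by blast
  have bd: "bdd_above ((\<lambda>b. dist x b) ` P)" using M by (intro bdd_aboveI[where M=M]) auto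
  have "dist x y \<le> (SUP b\<in>P. dist x b)" by (rule cSUP_upper[OF y bd])
  also have "\<dots> = (SUP b\<in>P. INF a\<in>{x}. dist a b)" by simp
  also have "\<dots> \<le> dH {x} P" unfolding dH_def hdist_def by simp
  finally show "dist x y < e" using d by simp
qed

lemma per_mult:
  assumes "(f ^^ p) ` P = P"
  shows "(f ^^ (p * k)) ` P = P"
proof (induction k)
  case 0 show ?case by simp
next
  case (Suc k)
  have "(f ^^ (p * Suc k)) ` P = (f ^^ p) ` ((f ^^ (p * k)) ` P)"
    by (simp only: mult_Suc_right funpow_add image_comp)
  also have "\<dots> = P" using Suc.IH assms by simp
  finally show ?case .
qed

lemma approx_pt:
  assumes a: "a \<in> {0..1}" and x: "x \<in> cut w a" and e: "e > 0"
  shows "\<exists>z. w z > 0 \<and> w z \<ge> a \<and> dist x z < e"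
proof (cases "a = 0")
  case True
  then have "x \<in> closure {x. w x > 0}" using x by (simp add: cut_def)
  then obtain z where "z \<in> {x. w x > 0}" "dist z x < e" using e closure_approachable by blast
  then show ?thesis using True by (intro exI[of _ z]) (auto simp: dist_commute)
next
  case False
  then have "w x \<ge> a" "a > 0" using x a by (auto simp: cut_def)
  then show ?thesis using e by (intro exI[of _ x]) auto
qed

lemma in_cut_pos:
  assumes "w z > 0" "w z \<ge> a"
  shows "z \<in> cut w a"
proof (cases "a = 0")
  case True
  have "z \<in> {x. w x > 0}" using assms by simp
  then have "z \<in> closure {x. w x > 0}" using closure_subset[of "{x. w x > 0}"] by (rule subsetD[rotated])
  then show ?thesis using True by (simp add: cut_def)
next
  case False then show ?thesis using assms by (simp add: cut_def)
qed

lemma construct: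
  assumes D: "dense_wrt dH KX (Per (fbar f) KX)" and u: "u \<in> FX" and e: "e > 0"
  shows "\<exists>v\<in>Per (zadeh f) FX. close u v (3 * e)"
proof -
  let ?S = "cut u 0"
  have cS: "compact ?S" using u unfolding FX_def by blast
  have cov: "?S \<subseteq> (\<Union>x\<in>?S. ball x e)" using e by auto
  obtain F where F: "F \<subseteq> ?S" "finite F" "?S \<subseteq> (\<Union>x\<in>F. ball x e)"
    using compactE_image[OF cS _ cov] by (metis open_ball)
  define C where "C x = ?S \<inter> cball x e" for x
  have "\<forall>x\<in>F. \<exists>z. z \<in> C x \<and> (\<forall>w\<in>C x. u w \<le> u z)"
  proof
    fix x assume x: "x \<in> F"
    have "compact (C x)" unfolding C_def using cS by (simp add: compact_Int_closed)
    moreover have "x \<in> C x" using x F(1) e unfolding C_def by auto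
    then have "C x \<noteq> {}" by blast
    moreover have "upper_semicont u" using u unfolding FX_def by blast
    ultimately show "\<exists>z. z \<in> C x \<and> (\<forall>w\<in>C x. u w \<le> u z)" using usc_max by blast
  qed
  then obtain z where z: "\<forall>x\<in>F. z x \<in> C x \<and> (\<forall>w\<in>C x. u w \<le> u (z x))" by (metis bchoice)
  define t where "t x = u (z x)" for x
  have t01: "\<forall>x. 0 \<le> t x \<and> t x \<le> 1" using u unfolding FX_def t_def by auto
  have "\<forall>x\<in>F. \<exists>P. P \<in> Per (fbar f) KX \<and> dH {x} P < e"
  proof
    fix x assume x: "x \<in> F"
    have "{x} \<in> KX" unfolding KX_def by simp
    then show "\<exists>P. P \<in> Per (fbar f) KX \<and> dH {x} P < e" using D e unfolding dense_wrt_def by blast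
  qed
  then obtain P where P: "\<forall>x\<in>F. P x \<in> Per (fbar f) KX \<and> dH {x} (P x) < e" by (metis bchoice)
  have PK: "\<forall>x\<in>F. P x \<in> KX" using P unfolding Per_def by blast
  have Pnear: "\<forall>x\<in>F. \<forall>y\<in>P x. dist x y < e" using P PK singleton_near by blast
  have "\<forall>x\<in>F. \<exists>p. p > 0 \<and> (f ^^ p) ` P x = P x"
    using P unfolding Per_def fbar_iter by blast
  then obtain p where p: "\<forall>x\<in>F. p x > 0 \<and> (f ^^ p x) ` P x = P x" by (metis bchoice)
  define N where "N = prod p F"
  have N0: "N > 0" unfolding N_def using p by (intro prod_pos) auto
  have perN: "\<forall>x\<in>F. (f ^^ N) ` P x = P x"
  proof
    fix x assume x: "x \<in> F"
    have "p x dvd N" unfolding N_def using F(2) x by (rule dvd_prodI)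
    then obtain k where "N = p x * k" by (auto elim: dvdE)
    then show "(f ^^ N) ` P x = P x" using per_mult[where f=f and p="p x" and P="P x" and k=k] p x by simp
  qed
  define v where "v = W F t P"
  have v0: "\<And>y. 0 \<le> v y" unfolding v_def by (rule W_nonneg[OF F(2)])
  have v1: "\<And>y. v y \<le> 1" unfolding v_def using t01 by (intro W_le1[OF F(2)]) auto
  have vge: "\<And>i y. i \<in> F \<Longrightarrow> y \<in> P i \<Longrightarrow> t i \<le> v y" unfolding v_def by (rule W_ge[OF F(2)])
  have vpos: "\<And>y. v y > 0 \<Longrightarrow> \<exists>i\<in>F. y \<in> P i \<and> v y = t i" unfolding v_def by (rule W_pos[OF F(2)])
  have vcases: "\<And>y. v y = 0 \<or> (\<exists>i\<in>F. y \<in> P i \<and> v y = t i)" unfolding v_def by (rule W_cases[OF F(2)])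
  have Pne: "\<forall>x\<in>F. P x \<noteq> {}" using PK unfolding KX_def by blast
  have Pc: "\<forall>x\<in>F. compact (P x)" using PK unfolding KX_def by blast
  have cover_pt: "\<exists>x\<in>F. dist x w < e \<and> u w \<le> t x" if w: "w \<in> ?S" for w
  proof -
    obtain x where x: "x \<in> F" "w \<in> ball x e" using F(3) w by blast
    then have "w \<in> C x" using w unfolding C_def by auto
    then have "u w \<le> t x" using z x(1) unfolding t_def by blast
    then show ?thesis using x by auto
  qed
  have usc: "upper_semicont v" unfolding upper_semicont_def
  proof
    fix a :: real
    show "open {y. v y < a}"
    proof (cases "a \<le> 0")
      case True
      have "\<not> v y < a" for y using v0[of y] True by linarith
      then have "{y. v y < a} = {}" by blast
      then show ?thesis by simp
    next
      case False
      have "{y. v y < a} = (\<Inter>i\<in>{i\<in>F. t i \<ge> a}. - P i)"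
      proof (intro equalityI subsetI)
        fix y assume "y \<in> {y. v y < a}"
        then have "v y < a" by simp
        then show "y \<in> (\<Inter>i\<in>{i\<in>F. t i \<ge> a}. - P i)" using vge by fastforce
      next
        fix y assume y: "y \<in> (\<Inter>i\<in>{i\<in>F. t i \<ge> a}. - P i)"
        show "y \<in> {y. v y < a}"
        proof (cases "v y = 0")
          case True then show ?thesis using False by simp
        next
          case F2: False
          then obtain i where "i \<in> F" "y \<in> P i" "v y = t i" using vcases by blast
          then show ?thesis using y by (auto simp: not_le)
        qed
      qed
      moreover have "open (\<Inter>i\<in>{i\<in>F. t i \<ge> a}. - P i)"
        using F(2) Pc by (intro open_INT) (auto simp: compact_imp_closed open_Compl)
      ultimately show ?thesis by simp
    qed
  qed
  let ?U = "\<Union>i\<in>F. P i"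
  have cU: "compact ?U" using F(2) Pc by (intro compact_UN) auto
  have "{y. v y > 0} \<subseteq> ?U" using vpos by blast
  then have subU: "cut v 0 \<subseteq> ?U" unfolding cut_def using cU
    by (simp add: closure_minimal compact_imp_closed)
  have "compact (?U \<inter> cut v 0)" by (rule compact_Int_closed[OF cU]) (simp add: cut_def)
  moreover have "?U \<inter> cut v 0 = cut v 0" using subU by blast
  ultimately have cv0: "compact (cut v 0)" by simp
  have c1: "cut v 1 \<noteq> {}"
  proof -
    obtain w where w: "w \<in> cut u 1" using u unfolding FX_def by blast
    then have "u w \<ge> 1" by (simp add: cut_def)
    moreover have "w \<in> ?S" using w FX_cut_sub[of 1 u] by auto
    ultimately obtain x where x: "x \<in> F" "t x \<ge> 1" using cover_pt by force
    obtain y where y: "y \<in> P x" using Pne x(1) by blast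
    have "v y \<ge> 1" using vge[OF x(1) y] x(2) by simp
    then show ?thesis by (auto simp: cut_def)
  qed
  have vF: "v \<in> FX" using v0 v1 usc cv0 c1 unfolding FX_def by blast
  have "(zadeh f ^^ N) v = W F t (\<lambda>i. (f ^^ N) ` P i)" unfolding v_def by (rule zadeh_W_iter[OF F(2)])
  also have "\<dots> = v"
  proof
    fix y
    have "{i\<in>F. y \<in> (f ^^ N) ` P i} = {i\<in>F. y \<in> P i}" using perN by auto
    then show "W F t (\<lambda>i. (f ^^ N) ` P i) y = v y" unfolding v_def W_def by simp
  qed
  finally have vper: "v \<in> Per (zadeh f) FX" using vF N0 unfolding Per_def by blast
  have "close u v (3 * e)" unfolding close_def
  proof (rule ballI, rule conjI)
    fix a :: real assume a: "a \<in> {0..1}"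
    show "\<forall>x\<in>cut u a. \<exists>y\<in>cut v a. dist x y \<le> 3 * e"
    proof
      fix x' assume x': "x' \<in> cut u a"
      obtain w where w: "u w > 0" "u w \<ge> a" "dist x' w < e" using approx_pt[OF a x' e] by blast
      have "w \<in> ?S" using in_cut_pos[of u w 0] w by simp
      then obtain x where x: "x \<in> F" "dist x w < e" "u w \<le> t x" using cover_pt by blast
      obtain y where y: "y \<in> P x" using Pne x(1) by blast
      have vy: "v y \<ge> t x" by (rule vge[OF x(1) y])
      have "y \<in> cut v a" using vy x(3) w by (intro in_cut_pos) auto
      moreover have "dist x y < e" using Pnear x(1) y by blast
      moreover have "dist x' y \<le> dist x' w + dist w x + dist x y"
        using dist_triangle[of x' y w] dist_triangle[of w y x] by simp
      ultimately show "\<exists>y\<in>cut v a. dist x' y \<le> 3 * e" using w(3) x(2)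
        by (intro bexI[of _ y]) (auto simp: dist_commute)
    qed
    show "\<forall>y\<in>cut v a. \<exists>x\<in>cut u a. dist x y \<le> 3 * e"
    proof
      fix y assume y: "y \<in> cut v a"
      obtain y' where y': "v y' > 0" "v y' \<ge> a" "dist y y' < e" using approx_pt[OF a y e] by blast
      obtain i where i: "i \<in> F" "y' \<in> P i" "v y' = t i" using vpos[OF y'(1)] by blast
      have zi: "z i \<in> C i" using z i(1) by blast
      have "u (z i) > 0" "u (z i) \<ge> a" using i(3) y' unfolding t_def by auto
      then have "z i \<in> cut u a" by (rule in_cut_pos)
      moreover have "dist i (z i) \<le> e" using zi unfolding C_def by auto
      moreover have "dist i y' < e" using Pnear i(1,2) by blast
      moreover have "dist (z i) y \<le> dist (z i) i + dist i y' + dist y' y"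
        using dist_triangle[of "z i" y i] dist_triangle[of i y y'] by simp
      ultimately show "\<exists>x\<in>cut u a. dist x y \<le> 3 * e" using y'(3)
        by (intro bexI[of _ "z i"]) (auto simp: dist_commute)
    qed
  qed
  then show ?thesis using vper by blast
qed

lemma K_to_all:
  assumes D: "dense_wrt dH KX (Per (fbar f) KX)"
  shows "dense_wrt d_inf FX (Per (zadeh f) FX) \<and> dense_wrt d_S FX (Per (zadeh f) FX)
       \<and> dense_wrt d_E FX (Per (zadeh f) FX)"
proof -
  have sub: "Per (zadeh f) FX \<subseteq> FX" by (rule Per_sub)
  have key: "\<exists>v\<in>Per (zadeh f) FX. d_inf u v < e \<and> d_S u v < e \<and> d_E u v < e"
    if u: "u \<in> FX" and e: "e > 0" for u and e :: real
  proof -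
    have e6: "e / 6 > 0" using e by simp
    obtain v where v: "v \<in> Per (zadeh f) FX" "close u v (3 * (e / 6))" using construct[OF D u e6] by blast
    have vF: "v \<in> FX" by (rule subsetD[OF sub v(1)])
    have "d_inf u v \<le> 3 * (e / 6)" by (rule close_dinf[OF u vF v(2)])
    moreover have "d_S u v \<le> 3 * (e / 6)" by (rule close_dS[OF u vF v(2)])
    moreover have "d_E u v \<le> 3 * (e / 6)" by (rule close_dE[OF u vF v(2)]) (use e in simp)
    ultimately show ?thesis using v(1) e by (intro bexI[of _ v]) auto
  qed
  show ?thesis unfolding dense_wrt_def using sub key by meson
qed

lemma dinf_to_d0:
  assumes D: "dense_wrt d_inf FX (Per (zadeh f) FX)"
  shows "dense_wrt d_0 FX (Per (zadeh f) FX)"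
  unfolding dense_wrt_def
proof (intro conjI ballI allI impI)
  show "Per (zadeh f) FX \<subseteq> FX" by (rule Per_sub)
  fix u :: "'a \<Rightarrow> real" and e :: real assume "u \<in> FX" "e > 0"
  then obtain v where "v \<in> Per (zadeh f) FX" "d_inf u v < e" using D unfolding dense_wrt_def by blast
  then show "\<exists>v\<in>Per (zadeh f) FX. d_0 u v < e" using d0_le_dinf[OF \<open>e > 0\<close>] by blast
qed

theorem lemma4p1:
  fixes f :: "'a::metric_space \<Rightarrow> 'a"
  assumes "continuous_on UNIV f"
  shows "(dense_wrt dH KX (Per (fbar f) KX) \<longleftrightarrow> dense_wrt d_inf FX (Per (zadeh f) FX))
       \<and> (dense_wrt d_inf FX (Per (zadeh f) FX) \<longleftrightarrow> dense_wrt d_0 FX (Per (zadeh f) FX))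
       \<and> (dense_wrt d_0 FX (Per (zadeh f) FX) \<longleftrightarrow> dense_wrt d_S FX (Per (zadeh f) FX))
       \<and> (dense_wrt d_S FX (Per (zadeh f) FX) \<longleftrightarrow> dense_wrt d_E FX (Per (zadeh f) FX))"
proof -
  let ?I = "dense_wrt dH KX (Per (fbar f) KX)"
  let ?II = "dense_wrt d_inf FX (Per (zadeh f) FX)"
  let ?III = "dense_wrt d_0 FX (Per (zadeh f) FX)"
  let ?IV = "dense_wrt d_S FX (Per (zadeh f) FX)"
  let ?V = "dense_wrt d_E FX (Per (zadeh f) FX)"
  have a: "?I \<Longrightarrow> ?II \<and> ?IV \<and> ?V" by (rule K_to_all)
  have b: "?II \<Longrightarrow> ?III" by (rule dinf_to_d0)
  have c: "?III \<Longrightarrow> ?I" by (rule d0_to_K[OF assms])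
  have d: "?IV \<Longrightarrow> ?I" by (rule dS_to_K[OF assms])
  have e: "?V \<Longrightarrow> ?I" by (rule dE_to_K[OF assms])
  show ?thesis using a b c d e by blast
qed

end
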